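(* Let $C^\lambda_{\mu\nu}$ be structure constants of an $n$-dimensional Lie algebra over a field $k$ of characteristic zero, $\mathcal C$ the matrix with entries $\mathcal C^\alpha_\beta=C^\alpha_{\beta\gamma}\partial^\gamma$ in $k[[\partial^1,\dots,\partial^n]]$, and $\delta_\rho:=\frac{\partial}{\partial(\partial^\rho)}$. Then for every $N=0,1,2,\dots$ and all indices $\gamma,\mu,\nu$, $$[\delta_\rho(\mathcal C^N)^\gamma_\mu]\,\mathcal C^\rho_\nu-(\delta_\rho\mathcal C^\gamma_\nu)(\mathcal C^N)^\rho_\mu=C^\sigma_{\mu\nu}(\mathcal C^N)^\gamma_\sigma .$$
   Context: Summation over repeated indices is understood. "Structure constants of a Lie algebra" means $[\hat x_\mu,\hat x_\nu]=C^\lambda_{\mu\nu}\hat x_\lambda$ for a basis $\hat x_1,\dots,\hat x_n$, so they are antisymmetric in the lower indices and satisfy the Jacobi identity. $\mathcal C^N$ is the $N$-th matrix power ($\mathcal C^0$ the identity matrix), and $\delta_\rho$ is the formal partial derivative with respect to the variable $\partial^\rho$. *)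

theory Defs
  imports "HOL-Library.Poly_Mapping"
begin

text \<open>Polynomials over 'k in the commuting variables \<partial>^i, i :: 'n (a finite index type of
  size n): the exponent vectors ('n to nat, finitely supported) are monomials (exponent vectors), and a polynomial maps monomials to
  coefficients; multiplication is the convolution product of Poly_Mapping.\<close>

type_synonym ('n, 'k) mpoly = "('n \<Rightarrow>\<^sub>0 nat) \<Rightarrow>\<^sub>0 'k"

definition pconst :: "'k::comm_ring_1 \<Rightarrow> ('n, 'k) mpoly" where
  "pconst c = Poly_Mapping.single 0 c"

definition pvar :: "'n \<Rightarrow> ('n, 'k::comm_ring_1) mpoly" where
  "pvar i = Poly_Mapping.single (Poly_Mapping.single i 1) 1"

definition pderiv_var :: "'n \<Rightarrow> ('n, 'k::comm_ring_1) mpoly \<Rightarrow> ('n, 'k) mpoly" where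
  "pderiv_var \<rho> p =
     (\<Sum>m\<in>Poly_Mapping.keys p. Poly_Mapping.single (m - Poly_Mapping.single \<rho> 1)
                     (of_nat (Poly_Mapping.lookup m \<rho>) * Poly_Mapping.lookup p m))"

definition mat_mult :: "('n::finite \<Rightarrow> 'n \<Rightarrow> 'a::comm_ring_1) \<Rightarrow> ('n \<Rightarrow> 'n \<Rightarrow> 'a) \<Rightarrow> 'n \<Rightarrow> 'n \<Rightarrow> 'a" where
  "mat_mult A B = (\<lambda>i j. \<Sum>k\<in>UNIV. A i k * B k j)"

definition mat_id :: "'n \<Rightarrow> 'n \<Rightarrow> 'a::comm_ring_1" where
  "mat_id = (\<lambda>i j. if i = j then 1 else 0)"

fun mat_pow :: "('n::finite \<Rightarrow> 'n \<Rightarrow> 'a::comm_ring_1) \<Rightarrow> nat \<Rightarrow> 'n \<Rightarrow> 'n \<Rightarrow> 'a" where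
  "mat_pow A 0 = mat_id"
| "mat_pow A (Suc N) = mat_mult (mat_pow A N) A"

text \<open>C l m n stands for C^l_{mn}: [x_m, x_n] = C^l_{mn} x_l. Structure constants of a Lie
  algebra: antisymmetric in the lower indices and satisfying the Jacobi identity.\<close>
definition lie_structure_constants :: "('n::finite \<Rightarrow> 'n \<Rightarrow> 'n \<Rightarrow> 'k::field) \<Rightarrow> bool" where
  "lie_structure_constants C \<longleftrightarrow>
     (\<forall>l m n. C l m n = - C l n m) \<and>
     (\<forall>l m n r. (\<Sum>s\<in>UNIV. C s m n * C l s r + C s n r * C l s m + C s r m * C l s n) = 0)"

definition Cmat :: "('n::finite \<Rightarrow> 'n \<Rightarrow> 'n \<Rightarrow> 'k::field) \<Rightarrow> 'n \<Rightarrow> 'n \<Rightarrow> ('n, 'k) mpoly" where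
  "Cmat C = (\<lambda>\<alpha> \<beta>. \<Sum>\<gamma>\<in>UNIV. pconst (C \<alpha> \<beta> \<gamma>) * pvar \<gamma>)"

end

theory Submission imports Defs begin

lemma lookup_pderiv:
  "Poly_Mapping.lookup (pderiv_var \<rho> p) m' =
     of_nat (Poly_Mapping.lookup m' \<rho> + 1) * Poly_Mapping.lookup p (m' + Poly_Mapping.single \<rho> 1)"
proof -
  let ?e = "Poly_Mapping.single \<rho> (1::nat)"
  have "Poly_Mapping.lookup (pderiv_var \<rho> p) m' =
    (\<Sum>m\<in>Poly_Mapping.keys p. if m = m' + ?e then of_nat (Poly_Mapping.lookup m \<rho>) * Poly_Mapping.lookup p m else 0)"
    unfolding pderiv_var_def lookup_sum
  proof (rule sum.cong[OF refl])
    fix m assume "m \<in> Poly_Mapping.keys p"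
    show "Poly_Mapping.lookup (Poly_Mapping.single (m - ?e) (of_nat (Poly_Mapping.lookup m \<rho>) * Poly_Mapping.lookup p m)) m' =
      (if m = m' + ?e then of_nat (Poly_Mapping.lookup m \<rho>) * Poly_Mapping.lookup p m else 0)"
    proof (cases "Poly_Mapping.lookup m \<rho> = 0")
      case True
      have "m \<noteq> m' + ?e" using True by (auto simp: lookup_add)
      then show ?thesis using True by (simp add: lookup_single)
    next
      case False
      have "(m - ?e = m') \<longleftrightarrow> (m = m' + ?e)"
      proof
        assume "m - ?e = m'" then show "m = m' + ?e" using False
          by (auto intro!: poly_mapping_eqI simp: lookup_add lookup_minus lookup_single when_def)
      next
        assume "m = m' + ?e" then show "m - ?e = m'"
          by (auto intro!: poly_mapping_eqI simp: lookup_add lookup_minus lookup_single when_def)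
      qed
      then show ?thesis by (auto simp: lookup_single when_def)
    qed
  qed
  also have "\<dots> = of_nat (Poly_Mapping.lookup m' \<rho> + 1) * Poly_Mapping.lookup p (m' + ?e)"
    by (simp add: lookup_add in_keys_iff)
  finally show ?thesis .
qed

lemma pderiv_add: "pderiv_var \<rho> (p + q) = pderiv_var \<rho> p + pderiv_var \<rho> q"
  by (rule poly_mapping_eqI) (simp add: lookup_pderiv lookup_add algebra_simps)

lemma pderiv_zero[simp]: "pderiv_var \<rho> 0 = 0"
  by (simp add: pderiv_var_def)

lemma pderiv_sum: "pderiv_var \<rho> (\<Sum>i\<in>A. f i) = (\<Sum>i\<in>A. pderiv_var \<rho> (f i))"
  by (induction A rule: infinite_finite_induct) (simp_all add: pderiv_add)

lemma pderiv_single: "pderiv_var \<rho> (Poly_Mapping.single m c) =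
   Poly_Mapping.single (m - Poly_Mapping.single \<rho> 1) (of_nat (Poly_Mapping.lookup m \<rho>) * c)"
  by (cases "c = 0") (simp_all add: pderiv_var_def)

lemma poly_expand: "p = (\<Sum>m\<in>Poly_Mapping.keys p. Poly_Mapping.single m (Poly_Mapping.lookup p m))"
  by (rule poly_mapping_eqI) (simp add: lookup_sum lookup_single when_def in_keys_iff)

lemma minus_plus_comm:
  assumes "Poly_Mapping.lookup m \<rho> \<noteq> 0"
  shows "m - Poly_Mapping.single \<rho> (1::nat) + n = m + n - Poly_Mapping.single \<rho> 1"
  using assms by (intro poly_mapping_eqI) (auto simp add: lookup_add lookup_minus lookup_single when_def)

lemma leibniz_single:
  "pderiv_var \<rho> (Poly_Mapping.single m a * Poly_Mapping.single n b :: ('n, 'k::comm_ring_1) mpoly) =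
   pderiv_var \<rho> (Poly_Mapping.single m a) * Poly_Mapping.single n b
   + Poly_Mapping.single m a * pderiv_var \<rho> (Poly_Mapping.single n b)"
proof -
  let ?e = "Poly_Mapping.single \<rho> (1::nat)"
  have 1: "Poly_Mapping.single (m - ?e + n) (of_nat (Poly_Mapping.lookup m \<rho>) * a * b)
      = Poly_Mapping.single (m + n - ?e) (of_nat (Poly_Mapping.lookup m \<rho>) * a * b :: 'k)"
  proof (cases "Poly_Mapping.lookup m \<rho> = 0")
    case False then show ?thesis by (simp only: minus_plus_comm[OF False])
  qed simp
  have 2: "Poly_Mapping.single (m + (n - ?e)) (a * (of_nat (Poly_Mapping.lookup n \<rho>) * b))
      = Poly_Mapping.single (m + n - ?e) (of_nat (Poly_Mapping.lookup n \<rho>) * a * b :: 'k)"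
    using minus_plus_comm[of n \<rho> m]
    by (cases "Poly_Mapping.lookup n \<rho> = 0") (simp_all add: ac_simps)
  have L: "pderiv_var \<rho> (Poly_Mapping.single m a * Poly_Mapping.single n b) =
     Poly_Mapping.single (m + n - ?e) (of_nat (Poly_Mapping.lookup m \<rho>) * a * b)
     + Poly_Mapping.single (m + n - ?e) (of_nat (Poly_Mapping.lookup n \<rho>) * a * b)"
    by (simp add: mult_single pderiv_single lookup_add algebra_simps flip: single_add)
  have R: "pderiv_var \<rho> (Poly_Mapping.single m a) * Poly_Mapping.single n b =
     Poly_Mapping.single (m - ?e + n) (of_nat (Poly_Mapping.lookup m \<rho>) * a * b)"
    by (simp add: mult_single pderiv_single mult.assoc)
  have R2: "Poly_Mapping.single m a * pderiv_var \<rho> (Poly_Mapping.single n b) =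
     Poly_Mapping.single (m + (n - ?e)) (a * (of_nat (Poly_Mapping.lookup n \<rho>) * b))"
    by (simp add: mult_single pderiv_single)
  show ?thesis
    by (simp only: L R R2 1 2)
qed

lemma leibniz:
  "pderiv_var \<rho> (p * q :: ('n, 'k::comm_ring_1) mpoly) = pderiv_var \<rho> p * q + p * pderiv_var \<rho> q"
proof -
  have hp: "(\<Sum>m\<in>Poly_Mapping.keys p. Poly_Mapping.single m (Poly_Mapping.lookup p m)) = p"
    by (rule poly_expand[symmetric])
  have hq: "(\<Sum>m\<in>Poly_Mapping.keys q. Poly_Mapping.single m (Poly_Mapping.lookup q m)) = q"
    by (rule poly_expand[symmetric])
  have "p * q = (\<Sum>m\<in>Poly_Mapping.keys p. Poly_Mapping.single m (Poly_Mapping.lookup p m)) *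
       (\<Sum>n\<in>Poly_Mapping.keys q. Poly_Mapping.single n (Poly_Mapping.lookup q n))"
    by (simp only: hp hq)
  also have "\<dots> = (\<Sum>m\<in>Poly_Mapping.keys p. \<Sum>n\<in>Poly_Mapping.keys q.
      Poly_Mapping.single m (Poly_Mapping.lookup p m) * Poly_Mapping.single n (Poly_Mapping.lookup q n))"
    by (simp add: sum_distrib_left sum_distrib_right) (rule sum.swap)
  finally have "pderiv_var \<rho> (p * q) = (\<Sum>m\<in>Poly_Mapping.keys p. \<Sum>n\<in>Poly_Mapping.keys q.
      pderiv_var \<rho> (Poly_Mapping.single m (Poly_Mapping.lookup p m)) * Poly_Mapping.single n (Poly_Mapping.lookup q n)
      + Poly_Mapping.single m (Poly_Mapping.lookup p m) * pderiv_var \<rho> (Poly_Mapping.single n (Poly_Mapping.lookup q n)))"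
    by (simp add: pderiv_sum leibniz_single)
  also have "\<dots> = pderiv_var \<rho> (\<Sum>m\<in>Poly_Mapping.keys p. Poly_Mapping.single m (Poly_Mapping.lookup p m)) *
       (\<Sum>n\<in>Poly_Mapping.keys q. Poly_Mapping.single n (Poly_Mapping.lookup q n))
     + (\<Sum>m\<in>Poly_Mapping.keys p. Poly_Mapping.single m (Poly_Mapping.lookup p m)) *
       pderiv_var \<rho> (\<Sum>n\<in>Poly_Mapping.keys q. Poly_Mapping.single n (Poly_Mapping.lookup q n))"
    by (simp add: sum.distrib pderiv_sum sum_distrib_left sum_distrib_right)
      (simp only: sum.swap[of _ "Poly_Mapping.keys q" "Poly_Mapping.keys p"])
  also have "\<dots> = pderiv_var \<rho> p * q + p * pderiv_var \<rho> q"
    by (simp only: hp hq)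
  finally show ?thesis .
qed


lemma pconst_mult: "pconst (a * b) = (pconst a * pconst b :: ('n, 'k::comm_ring_1) mpoly)"
  by (simp add: pconst_def mult_single)

lemma pconst_add: "pconst (a + b) = (pconst a + pconst b :: ('n, 'k::comm_ring_1) mpoly)"
  by (simp add: pconst_def single_add)

lemma pconst_sum: "pconst (\<Sum>i\<in>A. f i) = (\<Sum>i\<in>A. pconst (f i) :: ('n, 'k::comm_ring_1) mpoly)"
  by (induction A rule: infinite_finite_induct) (simp_all add: pconst_add, simp_all add: pconst_def)

lemma pderiv_pconst[simp]: "pderiv_var \<rho> (pconst c :: ('n, 'k::comm_ring_1) mpoly) = 0"
  by (simp add: pconst_def pderiv_single)

lemma pderiv_pvar: "pderiv_var \<rho> (pvar k :: ('n, 'k::comm_ring_1) mpoly) = (if \<rho> = k then 1 else 0)"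
  by (simp add: pvar_def pderiv_single lookup_single)

lemma pderiv_one[simp]: "pderiv_var \<rho> (1 :: ('n, 'k::comm_ring_1) mpoly) = 0"
  by (metis pconst_def pderiv_pconst single_one)

lemma dC: "pderiv_var \<rho> (Cmat C \<alpha> \<beta>) = pconst (C \<alpha> \<beta> \<rho>)"
  by (simp add: Cmat_def pderiv_sum leibniz pderiv_pvar if_distrib cong: if_cong)

lemma dprod: "pderiv_var \<rho> (X * Cmat C \<alpha> \<mu>) = pderiv_var \<rho> X * Cmat C \<alpha> \<mu> + X * pconst (C \<alpha> \<mu> \<rho>)"
  by (simp add: leibniz dC)

lemma G: "(\<Sum>s\<in>UNIV. pconst (a s) * (\<Sum>k\<in>UNIV. pconst (c s k) * pvar k))
   = (\<Sum>k\<in>(UNIV::'n::finite set). pconst (\<Sum>s\<in>(UNIV::'m::finite set). a s * c s k) * (pvar k :: ('n, 'k::comm_ring_1) mpoly))"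
  by (simp add: sum_distrib_left sum_distrib_right pconst_sum pconst_mult mult.assoc)
    (rule sum.swap)

lemma J:
  fixes C :: "'n::finite \<Rightarrow> 'n \<Rightarrow> 'n \<Rightarrow> 'k::field"
  assumes "lie_structure_constants C"
  shows "(\<Sum>s\<in>UNIV. pconst (C \<alpha> s \<nu>) * Cmat C s \<mu>) + (\<Sum>s\<in>UNIV. pconst (C \<alpha> \<mu> s) * Cmat C s \<nu>)
     = (\<Sum>s\<in>UNIV. pconst (C s \<mu> \<nu>) * Cmat C \<alpha> s)"
proof -
  from assms have anti: "\<And>l m n. C l m n = - C l n m"
    and jac: "\<And>l m n r. (\<Sum>s\<in>UNIV. C s m n * C l s r + C s n r * C l s m + C s r m * C l s n) = 0"
    unfolding lie_structure_constants_def by blast+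
  have coef: "(\<Sum>s\<in>UNIV. C \<alpha> s \<nu> * C s \<mu> k) + (\<Sum>s\<in>UNIV. C \<alpha> \<mu> s * C s \<nu> k)
      = (\<Sum>s\<in>UNIV. C s \<mu> \<nu> * C \<alpha> s k)" for k
  proof -
    have "(\<Sum>s\<in>UNIV. C s \<mu> \<nu> * C \<alpha> s k + C s \<nu> k * C \<alpha> s \<mu> + C s k \<mu> * C \<alpha> s \<nu>)
       = (\<Sum>s\<in>UNIV. C s \<mu> \<nu> * C \<alpha> s k - C \<alpha> s \<nu> * C s \<mu> k - C \<alpha> \<mu> s * C s \<nu> k)"
    proof (rule sum.cong[OF refl])
      fix s
      show "C s \<mu> \<nu> * C \<alpha> s k + C s \<nu> k * C \<alpha> s \<mu> + C s k \<mu> * C \<alpha> s \<nu>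
         = C s \<mu> \<nu> * C \<alpha> s k - C \<alpha> s \<nu> * C s \<mu> k - C \<alpha> \<mu> s * C s \<nu> k"
        using anti[of \<alpha> s \<mu>] anti[of s k \<mu>] by (simp add: algebra_simps)
    qed
    with jac[of \<mu> \<nu> \<alpha> k] have "(\<Sum>s\<in>UNIV. C s \<mu> \<nu> * C \<alpha> s k - C \<alpha> s \<nu> * C s \<mu> k - C \<alpha> \<mu> s * C s \<nu> k) = 0"
      by (simp only:)
    then have "(\<Sum>s\<in>UNIV. C s \<mu> \<nu> * C \<alpha> s k) - (\<Sum>s\<in>UNIV. C \<alpha> s \<nu> * C s \<mu> k) - (\<Sum>s\<in>UNIV. C \<alpha> \<mu> s * C s \<nu> k) = 0"
      by (simp only: sum_subtractf)
    then show ?thesis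
      by (simp add: diff_diff_eq eq_iff_diff_eq_0[symmetric] add.commute)
  qed
  have "(\<Sum>s\<in>UNIV. pconst (C \<alpha> s \<nu>) * Cmat C s \<mu>) + (\<Sum>s\<in>UNIV. pconst (C \<alpha> \<mu> s) * Cmat C s \<nu>)
    = (\<Sum>k\<in>UNIV. pconst ((\<Sum>s\<in>UNIV. C \<alpha> s \<nu> * C s \<mu> k) + (\<Sum>s\<in>UNIV. C \<alpha> \<mu> s * C s \<nu> k)) * pvar k)"
    unfolding Cmat_def G by (simp add: pconst_add distrib_right sum.distrib)
  also have "\<dots> = (\<Sum>s\<in>UNIV. pconst (C s \<mu> \<nu>) * Cmat C \<alpha> s)"
    unfolding Cmat_def G coef ..
  finally show ?thesis .
qed


theorem lemma2:
  fixes C :: "'n::finite \<Rightarrow> 'n \<Rightarrow> 'n \<Rightarrow> 'k::field_char_0"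
  assumes "lie_structure_constants C"
  shows "\<forall>N \<gamma> \<mu> \<nu>.
    (\<Sum>\<rho>\<in>UNIV. pderiv_var \<rho> (mat_pow (Cmat C) N \<gamma> \<mu>) * Cmat C \<rho> \<nu>)
    - (\<Sum>\<rho>\<in>UNIV. pderiv_var \<rho> (Cmat C \<gamma> \<nu>) * mat_pow (Cmat C) N \<rho> \<mu>)
    = (\<Sum>\<sigma>\<in>UNIV. pconst (C \<sigma> \<mu> \<nu>) * mat_pow (Cmat C) N \<gamma> \<sigma>)"
proof (intro allI)
  fix N \<gamma> \<mu> \<nu>
  let ?A = "Cmat C"
  let ?P = "mat_pow (Cmat C)"
  show "(\<Sum>\<rho>\<in>UNIV. pderiv_var \<rho> (?P N \<gamma> \<mu>) * ?A \<rho> \<nu>)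
    - (\<Sum>\<rho>\<in>UNIV. pderiv_var \<rho> (?A \<gamma> \<nu>) * ?P N \<rho> \<mu>)
    = (\<Sum>\<sigma>\<in>UNIV. pconst (C \<sigma> \<mu> \<nu>) * ?P N \<gamma> \<sigma>)"
  proof (induction N arbitrary: \<gamma> \<mu> \<nu>)
    case 0
    have a: "C \<gamma> \<nu> \<mu> = - C \<gamma> \<mu> \<nu>"
      using assms unfolding lie_structure_constants_def by blast
    show ?case
      by (simp add: mat_id_def dC if_distrib a pconst_def single_uminus cong: if_cong)
  next
    case (Suc N)
    have IH: "(\<Sum>\<rho>\<in>UNIV. pderiv_var \<rho> (?P N \<gamma> \<alpha>) * ?A \<rho> \<nu>)
       = (\<Sum>\<sigma>\<in>UNIV. pconst (C \<sigma> \<alpha> \<nu>) * ?P N \<gamma> \<sigma>) + (\<Sum>\<rho>\<in>UNIV. pconst (C \<gamma> \<nu> \<rho>) * ?P N \<rho> \<alpha>)" for \<alpha>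
      using Suc.IH[of \<gamma> \<alpha> \<nu>] by (simp add: dC algebra_simps)
    have powS: "?P (Suc N) a b = (\<Sum>\<alpha>\<in>UNIV. ?P N a \<alpha> * ?A \<alpha> b)" for a b
      by (simp add: mat_mult_def)
    have "(\<Sum>\<rho>\<in>UNIV. pderiv_var \<rho> (?P (Suc N) \<gamma> \<mu>) * ?A \<rho> \<nu>)
       - (\<Sum>\<rho>\<in>UNIV. pderiv_var \<rho> (?A \<gamma> \<nu>) * ?P (Suc N) \<rho> \<mu>)
      = (\<Sum>\<alpha>\<in>UNIV. (\<Sum>\<rho>\<in>UNIV. pderiv_var \<rho> (?P N \<gamma> \<alpha>) * ?A \<rho> \<nu>) * ?A \<alpha> \<mu>)
       + (\<Sum>\<alpha>\<in>UNIV. ?P N \<gamma> \<alpha> * (\<Sum>\<rho>\<in>UNIV. pconst (C \<alpha> \<mu> \<rho>) * ?A \<rho> \<nu>))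
       - (\<Sum>\<alpha>\<in>UNIV. (\<Sum>\<rho>\<in>UNIV. pconst (C \<gamma> \<nu> \<rho>) * ?P N \<rho> \<alpha>) * ?A \<alpha> \<mu>)"
    proof -
      have a1: "(\<Sum>\<rho>\<in>UNIV. pderiv_var \<rho> (?P (Suc N) \<gamma> \<mu>) * ?A \<rho> \<nu>)
        = (\<Sum>\<rho>\<in>UNIV. \<Sum>\<alpha>\<in>UNIV. pderiv_var \<rho> (?P N \<gamma> \<alpha>) * ?A \<alpha> \<mu> * ?A \<rho> \<nu>
             + ?P N \<gamma> \<alpha> * pconst (C \<alpha> \<mu> \<rho>) * ?A \<rho> \<nu>)"
        unfolding powS by (simp add: pderiv_sum dprod sum_distrib_right distrib_right)
      also have "\<dots> = (\<Sum>\<alpha>\<in>UNIV. \<Sum>\<rho>\<in>UNIV. pderiv_var \<rho> (?P N \<gamma> \<alpha>) * ?A \<alpha> \<mu> * ?A \<rho> \<nu>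
             + ?P N \<gamma> \<alpha> * pconst (C \<alpha> \<mu> \<rho>) * ?A \<rho> \<nu>)"
        by (rule sum.swap)
      also have "\<dots> = (\<Sum>\<alpha>\<in>UNIV. (\<Sum>\<rho>\<in>UNIV. pderiv_var \<rho> (?P N \<gamma> \<alpha>) * ?A \<rho> \<nu>) * ?A \<alpha> \<mu>)
       + (\<Sum>\<alpha>\<in>UNIV. ?P N \<gamma> \<alpha> * (\<Sum>\<rho>\<in>UNIV. pconst (C \<alpha> \<mu> \<rho>) * ?A \<rho> \<nu>))"
        by (simp add: sum.distrib sum_distrib_left sum_distrib_right mult_ac)
      finally have A1: "(\<Sum>\<rho>\<in>UNIV. pderiv_var \<rho> (?P (Suc N) \<gamma> \<mu>) * ?A \<rho> \<nu>) = \<dots>" .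
      have A2: "(\<Sum>\<rho>\<in>UNIV. pderiv_var \<rho> (?A \<gamma> \<nu>) * ?P (Suc N) \<rho> \<mu>)
         = (\<Sum>\<alpha>\<in>UNIV. (\<Sum>\<rho>\<in>UNIV. pconst (C \<gamma> \<nu> \<rho>) * ?P N \<rho> \<alpha>) * ?A \<alpha> \<mu>)"
        unfolding powS by (simp add: dC sum_distrib_left sum_distrib_right mult_ac) (rule sum.swap)
      show ?thesis by (simp only: A1 A2)
    qed
    also have "\<dots> = (\<Sum>\<alpha>\<in>UNIV. (\<Sum>\<sigma>\<in>UNIV. pconst (C \<sigma> \<alpha> \<nu>) * ?P N \<gamma> \<sigma>) * ?A \<alpha> \<mu>)
       + (\<Sum>\<alpha>\<in>UNIV. ?P N \<gamma> \<alpha> * (\<Sum>\<rho>\<in>UNIV. pconst (C \<alpha> \<mu> \<rho>) * ?A \<rho> \<nu>))"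
      by (simp add: IH distrib_right sum.distrib)
    also have "\<dots> = (\<Sum>\<sigma>\<in>UNIV. ?P N \<gamma> \<sigma> * ((\<Sum>\<alpha>\<in>UNIV. pconst (C \<sigma> \<alpha> \<nu>) * ?A \<alpha> \<mu>)
          + (\<Sum>\<rho>\<in>UNIV. pconst (C \<sigma> \<mu> \<rho>) * ?A \<rho> \<nu>)))"
    proof -
      have "(\<Sum>\<alpha>\<in>UNIV. (\<Sum>\<sigma>\<in>UNIV. pconst (C \<sigma> \<alpha> \<nu>) * ?P N \<gamma> \<sigma>) * ?A \<alpha> \<mu>)
         = (\<Sum>\<sigma>\<in>UNIV. ?P N \<gamma> \<sigma> * (\<Sum>\<alpha>\<in>UNIV. pconst (C \<sigma> \<alpha> \<nu>) * ?A \<alpha> \<mu>))"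
        by (simp add: sum_distrib_left sum_distrib_right mult_ac) (rule sum.swap)
      then show ?thesis by (simp add: distrib_left sum.distrib)
    qed
    also have "\<dots> = (\<Sum>\<sigma>\<in>UNIV. ?P N \<gamma> \<sigma> * (\<Sum>s\<in>UNIV. pconst (C s \<mu> \<nu>) * ?A \<sigma> s))"
      by (simp only: J[OF assms])
    also have "\<dots> = (\<Sum>\<sigma>\<in>UNIV. pconst (C \<sigma> \<mu> \<nu>) * ?P (Suc N) \<gamma> \<sigma>)"
      unfolding powS by (simp add: sum_distrib_left sum_distrib_right mult_ac) (rule sum.swap)
    finally show ?case .
  qed
qed

end
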